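(* Let $q\ge 2$, let $(R_i)_{i\ge1}$ be reals with $R_i\to\infty$, and let $n_i\to\infty$. For every $i$ let $\mathcal C_i$ be an ID code for $\Pi^q_{n_i}$ with $M_i\ge 2^{R_i n_i^{q-1}}$ messages and type-I and type-II error probabilities $\lambda_{1,i},\lambda_{2,i}$. Then $\liminf_{i\to\infty}(\lambda_{1,i}+\lambda_{2,i})\ge 1$.
   Context: Fix an integer $q\ge 2$ and let $\mathcal A_q=\{1,\dots,q\}$. For $n\ge 1$, $S_n$ is the symmetric group on $\{1,\dots,n\}$, and for $\mathbf x\in\mathcal A_q^n$, $\sigma\in S_n$, we write $\sigma\mathbf x=(x_{\sigma^{-1}(1)},\dots,x_{\sigma^{-1}(n)})$. The $n$-block $q$-ary uniform permutation channel $\Pi^q_n$ has input and output alphabet $\mathcal A_q^n$ and transition probabilities $\Pi^q_n(\mathbf y\mid\mathbf x)=\frac{1}{n!}\sum_{\sigma\in S_n}\mathbf 1\{\mathbf y=\sigma\mathbf x\}$; $\Pi^q$ denotes the family $(\Pi^q_n)_{n\ge1}$. An ID code (with deterministic decoders) with $M$ messages for $\Pi^q_n$ (an "$(n,M,\lambda_1,\lambda_2)$ ID code") is a family $\{(Q_i,\mathcal D_i)\}_{i=1}^M$ where each $Q_i$ is a probability distribution on $\mathcal A_q^n$ (the stochastic encoder of message $i$) and $\mathcal D_i\subseteq\mathcal A_q^n$ (the acceptance region of message $i$). Its error probabilities are $\lambda_{i\to j}=\sum_{\mathbf x}Q_i(\mathbf x)\sum_{\mathbf y\in\mathcal D_j}\Pi^q_n(\mathbf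 y\mid\mathbf x)$ for $i\ne j$ and $\lambda_{i\not\to i}=\sum_{\mathbf x}Q_i(\mathbf x)\sum_{\mathbf y\notin\mathcal D_i}\Pi^q_n(\mathbf y\mid\mathbf x)$; the type-I error probability is $\lambda_1=\max_i\lambda_{i\not\to i}$ and the type-II error probability is $\lambda_2=\max_{i\ne j}\lambda_{i\to j}$. *)

theory Defs
  imports "HOL-Analysis.Analysis" "HOL-Combinatorics.Permutations" "HOL-Library.Extended_Real"
begin

text \<open>Words of length n over the alphabet {1..q}, represented as lists
  (position k of the list is coordinate k+1).\<close>
definition words :: "nat \<Rightarrow> nat \<Rightarrow> nat list set" where
  "words q n = {xs. length xs = n \<and> set xs \<subseteq> {1..q}}"

definition perm_word :: "nat \<Rightarrow> (nat \<Rightarrow> nat) \<Rightarrow> nat list \<Rightarrow> nat list" where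
  "perm_word n \<sigma> xs = map (\<lambda>k. xs ! (inv \<sigma> k)) [0..<n]"

definition perm_channel :: "nat \<Rightarrow> nat list \<Rightarrow> nat list \<Rightarrow> real" where
  "perm_channel n y x =
     real (card {\<sigma>. \<sigma> permutes {0..<n} \<and> y = perm_word n \<sigma> x}) / fact n"

text \<open>An (n, M) ID code with messages 0..<M: stochastic encoders Q i (probability
  distributions on words q n) and acceptance regions D i \<subseteq> words q n.\<close>
definition is_ID_code ::
  "nat \<Rightarrow> nat \<Rightarrow> nat \<Rightarrow> (nat \<Rightarrow> nat list \<Rightarrow> real) \<Rightarrow> (nat \<Rightarrow> nat list set) \<Rightarrow> bool" where
  "is_ID_code q n M Q D \<longleftrightarrow>
     (\<forall>i<M. (\<forall>x\<in>words q n. Q i x \<ge> 0) \<and> (\<Sum>x\<in>words q n. Q i x) = 1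
            \<and> D i \<subseteq> words q n)"

definition err_to :: "nat \<Rightarrow> nat \<Rightarrow> (nat \<Rightarrow> nat list \<Rightarrow> real) \<Rightarrow> (nat \<Rightarrow> nat list set)
    \<Rightarrow> nat \<Rightarrow> nat \<Rightarrow> real" where
  "err_to q n Q D i j =
     (\<Sum>x\<in>words q n. Q i x * (\<Sum>y\<in>D j. perm_channel n y x))"

definition err_not :: "nat \<Rightarrow> nat \<Rightarrow> (nat \<Rightarrow> nat list \<Rightarrow> real) \<Rightarrow> (nat \<Rightarrow> nat list set)
    \<Rightarrow> nat \<Rightarrow> real" where
  "err_not q n Q D i =
     (\<Sum>x\<in>words q n. Q i x * (\<Sum>y\<in>words q n - D i. perm_channel n y x))"

text \<open>Type-II error: max over ordered pairs of
  distinct messages (0 is inserted only to make Max well-defined when M = 1;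
  all error terms are nonnegative so this changes nothing when M \<ge> 2).\<close>
definition type1_err :: "nat \<Rightarrow> nat \<Rightarrow> nat \<Rightarrow> (nat \<Rightarrow> nat list \<Rightarrow> real) \<Rightarrow> (nat \<Rightarrow> nat list set) \<Rightarrow> real" where
  "type1_err q n M Q D = Max ((\<lambda>i. err_not q n Q D i) ` {0..<M})"

definition type2_err :: "nat \<Rightarrow> nat \<Rightarrow> nat \<Rightarrow> (nat \<Rightarrow> nat list \<Rightarrow> real) \<Rightarrow> (nat \<Rightarrow> nat list set) \<Rightarrow> real" where
  "type2_err q n M Q D =
     Max (insert 0 {err_to q n Q D i j | i j. i < M \<and> j < M \<and> i \<noteq> j})"

end

theory Submission
  imports Defs
begin

lemma perm_word_words:
  assumes "x \<in> words q n" "\<sigma> permutes {0..<n}"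
  shows "perm_word n \<sigma> x \<in> words q n"
proof -
  have "inv \<sigma> k < n" if "k < n" for k
    using permutes_in_image[OF permutes_inv[OF assms(2)], of k] that by auto
  then show ?thesis using assms(1) unfolding words_def perm_word_def
    by (auto simp: subset_iff)
qed

lemma perm_channel_nonneg: "perm_channel n y x \<ge> 0"
  by (simp add: perm_channel_def)

lemma perm_channel_sum:
  assumes "x \<in> words q n"
  shows "(\<Sum>y\<in>words q n. perm_channel n y x) = 1"
proof -
  let ?P = "{\<sigma>. \<sigma> permutes {0..<n}}"
  have fw: "finite (words q n)"
  proof -
    have "words q n = {xs. set xs \<subseteq> {1..q} \<and> length xs = n}" by (auto simp: words_def)
    then show ?thesis using finite_lists_length_eq[of "{1..q}" n] by simp
  qed
  have fP: "finite ?P" by (rule finite_permutations) simp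
  have "(\<Sum>y\<in>words q n. real (card {\<sigma>. \<sigma> permutes {0..<n} \<and> y = perm_word n \<sigma> x}))
      = (\<Sum>y\<in>words q n. (\<Sum>\<sigma>\<in>{\<sigma>\<in>?P. perm_word n \<sigma> x = y}. 1::real))"
  proof (intro sum.cong refl)
    fix y
    have "{\<sigma>. \<sigma> permutes {0..<n} \<and> y = perm_word n \<sigma> x} = {\<sigma>\<in>?P. perm_word n \<sigma> x = y}" by blast
    then show "real (card {\<sigma>. \<sigma> permutes {0..<n} \<and> y = perm_word n \<sigma> x}) = (\<Sum>\<sigma>\<in>{\<sigma>\<in>?P. perm_word n \<sigma> x = y}. 1::real)" by simp
  qed
  also have "\<dots> = (\<Sum>\<sigma>\<in>?P. 1::real)"
    by (rule sum.group[OF fP fw]) (use perm_word_words assms in auto)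
  also have "\<dots> = fact n" using card_permutations[of "{0..<n}" n] by simp
  finally show ?thesis unfolding perm_channel_def
    by (simp add: sum_divide_distrib[symmetric])
qed

lemma perm_word_comp:
  assumes "length x' = n" "p permutes {..<n}" "\<sigma> permutes {0..<n}"
  shows "perm_word n \<sigma> (permute_list p x') = perm_word n (\<sigma> \<circ> inv p) x'"
proof -
  have bp: "bij p" "bij \<sigma>" using assms permutes_bij by blast+
  have "inv (\<sigma> \<circ> inv p) = p \<circ> inv \<sigma>"
    using bp by (simp add: o_inv_distrib bij_imp_bij_inv inv_inv_eq)
  moreover have "inv \<sigma> k < n" if "k < n" for k
    using permutes_in_image[OF permutes_inv[OF assms(3)], of k] that by auto
  ultimately show ?thesis unfolding perm_word_def
    using assms by (auto simp: permute_list_nth)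
qed

lemma perm_channel_le:
  assumes "length x' = n" "mset x = mset x'"
  shows "perm_channel n y x \<le> perm_channel n y x'"
proof -
  obtain p where p: "p permutes {..<n}" "permute_list p x' = x"
    using mset_eq_permutation[OF assms(2)] assms(1) by metis
  have pp: "p permutes {0..<n}" using p(1) by (simp add: lessThan_atLeast0)
  let ?A = "{\<sigma>. \<sigma> permutes {0..<n} \<and> y = perm_word n \<sigma> x}"
  let ?B = "{\<sigma>. \<sigma> permutes {0..<n} \<and> y = perm_word n \<sigma> x'}"
  have fB: "finite ?B" using finite_permutations[of "{0..<n}"] by (auto intro: finite_subset)
  have inj: "inj_on (\<lambda>\<sigma>. \<sigma> \<circ> inv p) ?A"
  proof
    fix a b :: "nat \<Rightarrow> nat" assume "a \<circ> inv p = b \<circ> inv p"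
    then have "a \<circ> inv p \<circ> p = b \<circ> inv p \<circ> p" by simp
    then show "a = b" using permutes_bij[OF pp]
      by (simp add: o_assoc[symmetric] bij_is_inj inv_o_cancel)
  qed
  have "(\<lambda>\<sigma>. \<sigma> \<circ> inv p) ` ?A \<subseteq> ?B"
    using perm_word_comp[OF assms(1) p(1)] p(2) pp
    by (auto intro: permutes_compose permutes_inv)
  then have "card ?A \<le> card ?B" using card_inj_on_le[OF inj _ fB] by blast
  then show ?thesis unfolding perm_channel_def
    by (simp add: divide_right_mono)
qed


definition SL :: "nat \<Rightarrow> nat \<Rightarrow> nat list set" where
  "SL T N = {ks. length ks = T \<and> sum_list ks \<le> N}"

lemma SL_finite: "finite (SL T N)"
proof -
  have "SL T N \<subseteq> {ks. set ks \<subseteq> {0..N} \<and> length ks = T}"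
    unfolding SL_def by (auto dest: member_le_sum_list)
  then show ?thesis using finite_lists_length_eq[of "{0..N}" T] finite_subset by blast
qed

lemma SL_card: "card (SL T N) \<le> 2 ^ (N + T)"
proof (induction "N + T" arbitrary: N T)
  case 0
  then have "SL T N = {[]}" by (auto simp: SL_def)
  then show ?case by simp
next
  case (Suc m)
  show ?case
  proof (cases T)
    case 0
    then have "SL T N = {[]}" by (auto simp: SL_def)
    then show ?thesis by simp
  next
    case (Suc T')
    show ?thesis
    proof (cases N)
      case 0
      have sub0: "SL T N \<subseteq> {replicate T 0}"
      proof
        fix ks assume "ks \<in> SL T N"
        then have len: "length ks = T" and s0: "sum_list ks \<le> 0" using \<open>N = 0\<close> by (simp_all add: SL_def)
        have z: "\<And>y. y \<in> set ks \<Longrightarrow> y = 0" using s0 by simp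
        have "ks = replicate T 0" by (rule replicate_eqI[OF len z])
        then show "ks \<in> {replicate T 0}" by simp
      qed
      have "card (SL T N) \<le> card {replicate T 0}" using card_mono[OF _ sub0] by simp
      then have "card (SL T N) \<le> 1" by simp
      then show ?thesis proof -
        have "(1::nat) \<le> 2 ^ (N + T)" by simp
        then show ?thesis using \<open>card (SL T N) \<le> 1\<close> by linarith
      qed
    next
      case (Suc N')
      have sub: "SL T N \<subseteq> (Cons 0) ` SL T' N \<union> (\<lambda>ks. Suc (hd ks) # tl ks) ` SL T N'"
      proof
        fix ks assume "ks \<in> SL T N"
        then obtain v rest where ks: "ks = v # rest" "length rest = T'" "v + sum_list rest \<le> N"
          using \<open>T = Suc T'\<close> unfolding SL_def by (cases ks) auto
        show "ks \<in> (Cons 0) ` SL T' N \<union> (\<lambda>ks. Suc (hd ks) # tl ks) ` SL T N'"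
        proof (cases v)
          case 0 then show ?thesis using ks by (auto simp: SL_def)
        next
          case (Suc w)
          have "w # rest \<in> SL T N'" using ks Suc \<open>N = Suc N'\<close> \<open>T = Suc T'\<close> by (auto simp: SL_def)
          moreover have "ks = Suc (hd (w # rest)) # tl (w # rest)" using ks Suc by simp
          ultimately show ?thesis by blast
        qed
      qed
      have "card (SL T N) \<le> card ((Cons 0) ` SL T' N \<union> (\<lambda>ks. Suc (hd ks) # tl ks) ` SL T N')"
        by (rule card_mono[OF _ sub]) (simp add: SL_finite)
      also have "\<dots> \<le> card (SL T' N) + card (SL T N')"
        by (rule order_trans[OF card_Un_le add_mono[OF card_image_le card_image_le]]) (simp_all add: SL_finite)
      also have "\<dots> \<le> 2 ^ (N + T') + 2 ^ (N' + T)"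
      proof (rule add_mono)
        show "card (SL T' N) \<le> 2 ^ (N + T')"
          by (rule Suc.hyps) (use \<open>Suc m = N + T\<close> \<open>T = Suc T'\<close> in simp)
        show "card (SL T N') \<le> 2 ^ (N' + T)"
          by (rule Suc.hyps) (use \<open>Suc m = N + T\<close> \<open>N = Suc N'\<close> in simp)
      qed
      also have "\<dots> = 2 ^ (N + T)" using \<open>T = Suc T'\<close> \<open>N = Suc N'\<close> by simp
      finally show ?thesis .
    qed
  qed
qed


definition tau :: "nat \<Rightarrow> nat list \<Rightarrow> nat list" where
  "tau q x = map (count_list x) [1..<q]"

lemma finite_words: "finite (words q n)"
proof -
  have "words q n = {xs. set xs \<subseteq> {1..q} \<and> length xs = n}" by (auto simp: words_def)
  then show ?thesis using finite_lists_length_eq[of "{1..q}" n] by simp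
qed

lemma tau_card: "card (tau q ` words q n) \<le> (n+1)^(q-1)"
proof -
  have "tau q ` words q n \<subseteq> {ls. set ls \<subseteq> {0..n} \<and> length ls = q-1}"
    unfolding tau_def words_def using count_le_length by fastforce
  then have "card (tau q ` words q n) \<le> card {ls. set ls \<subseteq> {0..n} \<and> length ls = q-1}"
    by (rule card_mono[rotated]) (simp add: finite_lists_length_eq)
  then show ?thesis by (simp add: card_lists_length_eq)
qed

lemma tau_mset:
  assumes "q \<ge> 1" "x \<in> words q n" "x' \<in> words q n" "tau q x = tau q x'"
  shows "mset x = mset x'"
proof -
  have cl: "count_list x a = count_list x' a" if "a \<in> {1..<q}" for a
    using assms(4) that unfolding tau_def by simp
  have sx: "set x \<subseteq> {1..q}" "set x' \<subseteq> {1..q}" "length x = n" "length x' = n"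
    using assms(2,3) by (auto simp: words_def)
  have split: "{1..q} = insert q {1..<q}" using assms(1) by auto
  have "sum (count_list x) {1..q} = n" "sum (count_list x') {1..q} = n"
    using sum_count_set[OF sx(1)] sum_count_set[OF sx(2)] sx(3,4) by auto
  then have "count_list x q + sum (count_list x) {1..<q} = count_list x' q + sum (count_list x') {1..<q}"
    unfolding split by simp
  moreover have "sum (count_list x) {1..<q} = sum (count_list x') {1..<q}"
    using cl by (rule sum.cong[OF refl])
  ultimately have cq: "count_list x q = count_list x' q" by simp
  show ?thesis
  proof (rule multiset_eqI)
    fix a
    show "count (mset x) a = count (mset x') a"
    proof (cases "a \<in> {1..q}")
      case True
      then have "a \<in> {1..<q} \<or> a = q" by auto
      then show ?thesis using cl cq by (auto simp: count_mset)
    next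
      case False
      then have "a \<notin> set x" "a \<notin> set x'" using sx by auto
      then show ?thesis by (simp add: count_mset count_list_0_iff)
    qed
  qed
qed

lemma tau_channel:
  assumes "q \<ge> 1" "x \<in> words q n" "x' \<in> words q n" "tau q x = tau q x'"
  shows "perm_channel n y x = perm_channel n y x'"
proof -
  have m: "mset x = mset x'" by (rule tau_mset[OF assms])
  have l: "length x = n" "length x' = n" using assms(2,3) by (auto simp: words_def)
  show ?thesis by (rule antisym[OF perm_channel_le[OF l(2) m] perm_channel_le[OF l(1) m[symmetric]]])
qed


lemma finite_bound:
  fixes q n M :: nat and Q :: "nat \<Rightarrow> nat list \<Rightarrow> real" and D :: "nat \<Rightarrow> nat list set" and N :: nat
  assumes q: "q \<ge> 1" and code: "is_ID_code q n M Q D" and N: "N \<ge> 1"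
    and big: "M > 2 ^ (N + (n+1)^(q-1))"
  shows "1 - real ((n+1)^(q-1)) / real N \<le> type1_err q n M Q D + type2_err q n M Q D"
proof -
  define W where "W = words q n"
  define TY where "TY = tau q ` W"
  have fW: "finite W" unfolding W_def by (rule finite_words)
  have fTY: "finite TY" unfolding TY_def using fW by simp
  have cTY: "card TY \<le> (n+1)^(q-1)" unfolding TY_def W_def by (rule tau_card)
  have Qnn: "\<And>m x. m < M \<Longrightarrow> x \<in> W \<Longrightarrow> Q m x \<ge> 0"
   and Qs: "\<And>m. m < M \<Longrightarrow> (\<Sum>x\<in>W. Q m x) = 1"
   and DW: "\<And>m. m < M \<Longrightarrow> D m \<subseteq> W"
    using code unfolding is_ID_code_def W_def by auto
  define g where "g j x = (\<Sum>y\<in>D j. perm_channel n y x)" for j x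
  have g01: "0 \<le> g j x \<and> g j x \<le> 1" if "j < M" "x \<in> W" for j x
  proof -
    have "g j x \<le> (\<Sum>y\<in>W. perm_channel n y x)"
      unfolding g_def by (rule sum_mono2[OF fW DW[OF that(1)]]) (simp add: perm_channel_nonneg)
    also have "\<dots> = 1" using perm_channel_sum that(2) unfolding W_def by blast
    finally show ?thesis unfolding g_def by (simp add: sum_nonneg perm_channel_nonneg)
  qed
  define rep where "rep t = (SOME x. x \<in> W \<and> tau q x = t)" for t
  have rep: "rep t \<in> W \<and> tau q (rep t) = t" if tt: "t \<in> TY" for t
  proof -
    obtain x where "x \<in> W" "tau q x = t" using tt unfolding TY_def by blast
    then have "x \<in> W \<and> tau q x = t" by blast
    then show ?thesis unfolding rep_def by (rule someI)
  qed
  define G where "G j t = g j (rep t)" for j t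
  have gG: "g j x = G j (tau q x)" if "x \<in> W" for j x
  proof -
    have r: "rep (tau q x) \<in> W" "tau q (rep (tau q x)) = tau q x"
      using rep[of "tau q x"] that unfolding TY_def by auto
    show ?thesis unfolding G_def g_def
      by (rule sum.cong[OF refl], rule tau_channel[OF q that[unfolded W_def] r(1)[unfolded W_def] r(2)[symmetric]])
  qed
  have G01: "0 \<le> G j t \<and> G j t \<le> 1" if "j < M" "t \<in> TY" for j t
    unfolding G_def using g01[OF that(1)] rep[OF that(2)] by blast
  define P where "P m t = (\<Sum>x\<in>{x\<in>W. tau q x = t}. Q m x)" for m t
  have Pnn: "P m t \<ge> 0" if "m < M" for m t
    unfolding P_def using Qnn[OF that] by (intro sum_nonneg) auto
  have TYsub: "tau q ` W \<subseteq> TY" unfolding TY_def by simp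
  have Psum: "(\<Sum>t\<in>TY. P m t) = 1" if "m < M" for m
    unfolding P_def using sum.group[OF fW fTY TYsub, of "Q m"] Qs[OF that] by simp
  have key: "(\<Sum>x\<in>W. Q m x * g j x) = (\<Sum>t\<in>TY. P m t * G j t)" for m j
  proof -
    have "(\<Sum>x\<in>W. Q m x * g j x) = (\<Sum>x\<in>W. Q m x * G j (tau q x))"
      by (rule sum.cong[OF refl]) (simp add: gG)
    also have "\<dots> = (\<Sum>t\<in>TY. \<Sum>x\<in>{x\<in>W. tau q x = t}. Q m x * G j (tau q x))"
      by (rule sum.group[OF fW fTY TYsub, symmetric])
    also have "\<dots> = (\<Sum>t\<in>TY. P m t * G j t)"
      unfolding P_def sum_distrib_right by (intro sum.cong refl) auto
    finally show ?thesis .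
  qed
  have eto: "err_to q n Q D m j = (\<Sum>t\<in>TY. P m t * G j t)" for m j
    unfolding err_to_def key[symmetric] W_def[symmetric] g_def ..
  have enot: "err_not q n Q D m = 1 - (\<Sum>t\<in>TY. P m t * G m t)" if "m < M" for m
  proof -
    have "err_not q n Q D m = (\<Sum>x\<in>W. Q m x * (1 - g m x))"
      unfolding err_not_def W_def[symmetric]
    proof (rule sum.cong[OF refl])
      fix x assume "x \<in> W"
      have "(\<Sum>y\<in>W - D m. perm_channel n y x) = (\<Sum>y\<in>W. perm_channel n y x) - g m x"
        unfolding g_def by (rule sum_diff[OF fW DW[OF that]])
      also have "\<dots> = 1 - g m x" using perm_channel_sum \<open>x \<in> W\<close> unfolding W_def by simp
      finally show "Q m x * (\<Sum>y\<in>W - D m. perm_channel n y x) = Q m x * (1 - g m x)" by simp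
    qed
    also have "\<dots> = (\<Sum>x\<in>W. Q m x) - (\<Sum>x\<in>W. Q m x * g m x)"
      by (simp add: right_diff_distrib sum_subtractf)
    finally show ?thesis using Qs[OF that] key by simp
  qed
  obtain ts where ts: "set ts = TY" "distinct ts" using finite_distinct_list[OF fTY] by blast
  define k where "k m = map (\<lambda>t. nat \<lfloor>P m t * real N\<rfloor>) ts" for m
  have kSL: "k m \<in> SL (card TY) N" if "m < M" for m
  proof -
    have "sum_list (k m) = (\<Sum>t\<in>TY. nat \<lfloor>P m t * real N\<rfloor>)"
      unfolding k_def using sum_list_distinct_conv_sum_set[OF ts(2)] ts(1) by metis
    then have "real (sum_list (k m)) = real (\<Sum>t\<in>TY. nat \<lfloor>P m t * real N\<rfloor>)" by simp
    also have "\<dots> = (\<Sum>t\<in>TY. real (nat \<lfloor>P m t * real N\<rfloor>))" by simp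
    also have "\<dots> \<le> (\<Sum>t\<in>TY. P m t * real N)"
    proof (rule sum_mono)
      fix t
      have "P m t * real N \<ge> 0" using Pnn[OF that] by simp
      then show "real (nat \<lfloor>P m t * real N\<rfloor>) \<le> P m t * real N" by linarith
    qed
    also have "\<dots> = real N" using Psum[OF that] by (simp add: sum_distrib_right[symmetric])
    finally have "sum_list (k m) \<le> N" by simp
    moreover have "length (k m) = card TY" unfolding k_def using distinct_card[OF ts(2)] ts(1) by simp
    ultimately show ?thesis unfolding SL_def by simp
  qed
  have "card (k ` {0..<M}) \<le> card (SL (card TY) N)"
    by (rule card_mono[OF SL_finite]) (use kSL in auto)
  also have "\<dots> \<le> 2 ^ (N + card TY)" by (rule SL_card)
  also have "\<dots> \<le> 2 ^ (N + (n+1)^(q-1))" using cTY by (intro power_increasing) auto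
  also have "\<dots> < M" by (rule big)
  finally have "\<not> inj_on k {0..<M}" using card_image by fastforce
  then obtain i j where ij: "i < M" "j < M" "i \<noteq> j" "k i = k j"
    unfolding inj_on_def by auto
  have close: "\<bar>P i t - P j t\<bar> \<le> 1 / real N" if "t \<in> TY" for t
  proof -
    have "nat \<lfloor>P i t * real N\<rfloor> = nat \<lfloor>P j t * real N\<rfloor>"
      using ij(4) ts(1) that unfolding k_def by simp
    moreover have "P i t * real N \<ge> 0" "P j t * real N \<ge> 0" using Pnn ij by simp_all
    ultimately have "\<lfloor>P i t * real N\<rfloor> = \<lfloor>P j t * real N\<rfloor>" by (metis nat_0_le zero_le_floor)
    then have "\<bar>P i t * real N - P j t * real N\<bar> < 1" by linarith
    then have "\<bar>P i t - P j t\<bar> * real N < 1" by (simp add: left_diff_distrib[symmetric] abs_mult)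
    then show ?thesis using N by (simp add: field_simps)
  qed
  have "err_not q n Q D i + err_to q n Q D j i = 1 - (\<Sum>t\<in>TY. (P i t - P j t) * G i t)"
    using enot[OF ij(1)] eto by (simp add: left_diff_distrib sum_subtractf)
  also have "\<dots> \<ge> 1 - (\<Sum>t\<in>TY. 1 / real N)"
  proof -
    have "(\<Sum>t\<in>TY. (P i t - P j t) * G i t) \<le> (\<Sum>t\<in>TY. 1 / real N)"
    proof (rule sum_mono)
      fix t assume t: "t \<in> TY"
      have "(P i t - P j t) * G i t \<le> \<bar>P i t - P j t\<bar> * G i t"
        using G01[OF ij(1) t] by (intro mult_right_mono) auto
      also have "\<dots> \<le> \<bar>P i t - P j t\<bar>" using G01[OF ij(1) t] by (simp add: mult_left_le)
      finally show "(P i t - P j t) * G i t \<le> 1 / real N" using close[OF t] by linarith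
    qed
    then show ?thesis by linarith
  qed
  finally have A: "1 - real (card TY) / real N \<le> err_not q n Q D i + err_to q n Q D j i" by simp
  have B: "real (card TY) / real N \<le> real ((n+1)^(q-1)) / real N"
    using cTY by (intro divide_right_mono) (simp_all only: of_nat_le_iff of_nat_0_le_iff)
  have t1: "err_not q n Q D i \<le> type1_err q n M Q D"
    unfolding type1_err_def using ij(1) by (intro Max_ge) auto
  have fin2: "finite {err_to q n Q D i j | i j. i < M \<and> j < M \<and> i \<noteq> j}"
  proof -
    have "{err_to q n Q D i j | i j. i < M \<and> j < M \<and> i \<noteq> j} \<subseteq> (\<lambda>(i,j). err_to q n Q D i j) ` ({0..<M} \<times> {0..<M})"
      by auto
    then show ?thesis by (rule finite_subset) simp
  qed
  have t2: "err_to q n Q D j i \<le> type2_err q n M Q D"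
    unfolding type2_err_def using ij fin2 by (intro Max_ge) auto
  show ?thesis using A B t1 t2 by linarith
qed


lemma arith_step:
  fixes m R \<delta> :: real and e :: nat and A N :: nat
  assumes m: "m \<ge> 1" and d: "\<delta> > 0" and A: "real A = (m+1)^e"
    and N: "N = nat \<lceil>2 * real A / \<delta>\<rceil>"
    and R: "R > 2^e * (2/\<delta> + 1) + 1"
  shows "N \<ge> 1" "real A / real N \<le> \<delta>/2" "real N + real A < R * m^e"
proof -
  have A1: "real A \<ge> 1" using A m by simp
  have x0: "2 * real A / \<delta> > 0" using A1 d by simp
  have Nge: "real N \<ge> 2 * real A / \<delta>" using N real_nat_ceiling_ge by simp
  have Nlt: "real N < 2 * real A / \<delta> + 1"
  proof -
    have "\<lceil>2 * real A / \<delta>\<rceil> \<ge> 0" using x0 by simp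
    then have "real N = of_int \<lceil>2 * real A / \<delta>\<rceil>" using N by simp
    then show ?thesis by linarith
  qed
  show "N \<ge> 1" using Nge x0 by simp
  have Npos: "real N > 0" using Nge x0 by linarith
  have "real A \<le> (\<delta>/2) * real N" using Nge d by (simp add: field_simps)
  then show "real A / real N \<le> \<delta>/2" using Npos by (simp add: field_simps)
  have me: "m^e \<ge> 1" using m by simp
  have Ale: "real A \<le> 2^e * m^e"
  proof -
    have "(m+1)^e \<le> (2*m)^e" using m by (intro power_mono) auto
    then show ?thesis using A by (simp add: power_mult_distrib)
  qed
  have "real N + real A < 2 * real A / \<delta> + 1 + real A" using Nlt by simp
  also have "\<dots> = real A * (2/\<delta> + 1) + 1" by (simp add: field_simps)
  also have "\<dots> \<le> 2^e * m^e * (2/\<delta> + 1) + m^e"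
    using Ale me d by (intro add_mono mult_right_mono) auto
  also have "\<dots> = m^e * (2^e * (2/\<delta> + 1) + 1)" by (simp add: field_simps)
  also have "\<dots> \<le> m^e * R" using R me by (intro mult_left_mono) auto
  finally show "real N + real A < R * m^e" by (simp add: mult.commute)
qed

lemma lin_aux: "1 - X \<le> S \<Longrightarrow> X \<le> (1 - r) / 2 \<Longrightarrow> 0 < 1 - r \<Longrightarrow> r < (S::real)"
  by (simp add: field_simps)

theorem theorem1:
  fixes q :: nat and R :: "nat \<Rightarrow> real" and n :: "nat \<Rightarrow> nat" and M :: "nat \<Rightarrow> nat"
    and Q :: "nat \<Rightarrow> nat \<Rightarrow> nat list \<Rightarrow> real" and D :: "nat \<Rightarrow> nat \<Rightarrow> nat list set"
  assumes "q \<ge> 2"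
    and "filterlim R at_top sequentially"
    and "filterlim n at_top sequentially"
    and "\<And>i. is_ID_code q (n i) (M i) (Q i) (D i)"
    and "\<And>i. real (M i) \<ge> 2 powr (R i * real (n i) ^ (q - 1))"
  shows "liminf (\<lambda>i. ereal (type1_err q (n i) (M i) (Q i) (D i)
                           + type2_err q (n i) (M i) (Q i) (D i))) \<ge> 1"
  unfolding le_Liminf_iff
proof (intro allI impI)
  fix y :: ereal assume "y < 1"
  then obtain r where r: "y < ereal r" "ereal r < 1" using ereal_dense2 by blast
  define \<delta> where "\<delta> = 1 - r"
  have d: "\<delta> > 0" using r(2) unfolding \<delta>_def by simp
  define C where "C = 2^(q-1) * (2/\<delta> + 1) + (1::real)"
  have ev1: "eventually (\<lambda>i. C < R i) sequentially"
    using assms(2) unfolding filterlim_at_top_dense by blast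
  have ev2: "eventually (\<lambda>i. 1 \<le> n i) sequentially"
    using assms(3) unfolding filterlim_at_top by blast
  show "eventually (\<lambda>i. y < ereal (type1_err q (n i) (M i) (Q i) (D i)
                           + type2_err q (n i) (M i) (Q i) (D i))) sequentially"
    using ev1 ev2
  proof eventually_elim
    case (elim i)
    define A where "A = (n i + 1)^(q-1)"
    define N where "N = nat \<lceil>2 * real A / \<delta>\<rceil>"
    have m1: "real (n i) \<ge> 1" using elim(2) by simp
    have Areal: "real A = (real (n i) + 1)^(q-1)" unfolding A_def by (simp add: add.commute)
    note ar = arith_step[OF m1 d Areal N_def elim(1)[unfolded C_def]]
    have "real (2 ^ (N + A) :: nat) = 2 powr (real N + real A)"
      by (simp add: powr_realpow[symmetric])
    also have "\<dots> < 2 powr (R i * real (n i) ^ (q - 1))"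
      using ar(3) by simp
    also have "\<dots> \<le> real (M i)" by (rule assms(5))
    finally have big: "M i > 2 ^ (N + (n i + 1)^(q-1))" unfolding A_def by linarith
    have "1 - real ((n i + 1)^(q-1)) / real N \<le> type1_err q (n i) (M i) (Q i) (D i)
                           + type2_err q (n i) (M i) (Q i) (D i)"
      by (rule finite_bound[OF _ assms(4) ar(1) big]) (use assms(1) in simp)
    moreover have "real ((n i + 1)^(q-1)) / real N \<le> \<delta>/2" using ar(2) unfolding A_def .
    ultimately have "r < type1_err q (n i) (M i) (Q i) (D i) + type2_err q (n i) (M i) (Q i) (D i)"
      using d unfolding \<delta>_def by (rule lin_aux)
    then show ?case using r(1) less_trans by fastforce
  qed
qed

end
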